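(* Let $m\ge 3$ and let $K\ne\Delta_{[m]}$ be a simplicial complex on $[m]$ such that $f_0(K)<m$ or $f_0(K^\vee)<m$. Then $\chi(\mathrm{Bier}(K))=m-1$ if and only if, after a permutation of $[m]$, $K$ equals one of the following complexes on $[m]$: $\Delta_{[m-1]}$; $\Delta_{[m-2]}$; $\Delta_{[m-1]}\cup\Delta_{[m-2]\cup\{m\}}$ (here $\Delta_I=2^I$). Moreover, in each of these cases $\mathrm{Bier}(K)$ is isomorphic to the $(m-3)$-fold iterated suspension $\Sigma^{m-3}(Z_4)$ of the 4-cycle, i.e. to the boundary complex of the $(m-1)$-dimensional cross-polytope.
   Context: A simplicial complex $K$ on $[m]=\{1,\dots,m\}$ is a nonempty family of subsets of $[m]$ closed under taking subsets; $V(K)=\{i:\{i\}\in K\}$ and $f_0(K)=|V(K)|$ (elements of $[m]\setminus V(K)$ are ghost vertices). Let $[m']=\{1',\dots,m'\}$ be a disjoint copy of $[m]$, $I'=\{i':i\in I\}$. For $K\ne 2^{[m]}$ the Alexander dual $K^\vee$ is the complex on $[m']$ with $J'\in K^\vee$ iff $[m]\setminus J\notin K$. The Bier sphere $\mathrm{Bier}(K)$ is the complex on $[m]\sqcup[m']$ with faces $I\sqcup J'$, $I\in K$, $J'\in K^\vee$, $I\cap J=\varnothing$. The chromatic number $\chi(L)$ is the least number of colors in a map $c\colon V(L)\to C$ with $c(u)\ne c(v)$ whenever $\{u,v\}\in L$. $Z_4$ is the 4-cycle graph; the suspension of $L$ is $\{\varnothing,\{v\},\{w\}\}*L$ for two new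 vertices $v,w$, where $*$ is the join. *)

theory Defs
  imports "HOL-Combinatorics.Permutations"
begin

definition simplicial_complex_on :: "nat \<Rightarrow> nat set set \<Rightarrow> bool" where
  "simplicial_complex_on m K \<longleftrightarrow> K \<noteq> {} \<and> (\<forall>F\<in>K. F \<subseteq> {1..m}) \<and>
     (\<forall>F\<in>K. \<forall>G. G \<subseteq> F \<longrightarrow> G \<in> K)"

definition vertices :: "'a set set \<Rightarrow> 'a set" where
  "vertices L = {v. {v} \<in> L}"

definition f0 :: "'a set set \<Rightarrow> nat" where
  "f0 L = card (vertices L)"

text \<open>Alexander dual on the copy [m']; the copy is represented by the same labels 1..m.\<close>
definition alex_dual :: "nat \<Rightarrow> nat set set \<Rightarrow> nat set set" where
  "alex_dual m K = {J. J \<subseteq> {1..m} \<and> {1..m} - J \<notin> K}"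

text \<open>Bier sphere on [m] \<squnion> [m']: Inl i stands for i, Inr i for i'.\<close>
definition bier :: "nat \<Rightarrow> nat set set \<Rightarrow> (nat + nat) set set" where
  "bier m K = {Inl ` I \<union> Inr ` J | I J. I \<in> K \<and> J \<in> alex_dual m K \<and> I \<inter> J = {}}"

definition chromatic_number :: "'a set set \<Rightarrow> nat" where
  "chromatic_number L = (LEAST n. \<exists>c :: 'a \<Rightarrow> nat.
      (\<forall>v\<in>vertices L. c v < n) \<and> (\<forall>u v. {u, v} \<in> L \<longrightarrow> u \<noteq> v \<longrightarrow> c u \<noteq> c v))"

definition join :: "'a set set \<Rightarrow> 'a set set \<Rightarrow> 'a set set" where
  "join A B = {F \<union> G | F G. F \<in> A \<and> G \<in> B}"

definition suspension :: "nat set set \<Rightarrow> nat set set" where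
  "suspension L = join {{}, {0}, {1}} ((`) ((`) (\<lambda>x. x + 2)) L)"

definition Z4 :: "nat set set" where
  "Z4 = {{}, {0}, {1}, {2}, {3}, {0,1}, {1,2}, {2,3}, {3,0}}"

definition complex_iso :: "'a set set \<Rightarrow> 'b set set \<Rightarrow> bool" where
  "complex_iso L M \<longleftrightarrow> (\<exists>f. inj_on f (\<Union>L) \<and> (`) ((`) f) L = M)"

end

theory Submission
  imports Defs
begin


definition cross :: "'a set \<Rightarrow> ('a \<Rightarrow> 'a) \<Rightarrow> 'a set set" where
  "cross W b = {F. F \<subseteq> W \<and> (\<forall>x\<in>F. b x \<notin> F)}"

definition invol :: "'a set \<Rightarrow> ('a \<Rightarrow> 'a) \<Rightarrow> bool" where
  "invol W b \<longleftrightarrow> (\<forall>x\<in>W. b x \<in> W \<and> b x \<noteq> x \<and> b (b x) = x)"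

lemma equiv_bij:
  "finite W \<Longrightarrow> invol W b \<Longrightarrow> finite V \<Longrightarrow> invol V a \<Longrightarrow> card W = card V \<Longrightarrow>
   \<exists>f. bij_betw f W V \<and> (\<forall>x\<in>W. f (b x) = a (f x))"
proof (induction "card W" arbitrary: W V rule: less_induct)
  case less
  show ?case
  proof (cases "W = {}")
    case True
    then have "V = {}" using less by auto
    then show ?thesis using True by (auto simp: bij_betw_def)
  next
    case False
    then obtain x where x: "x \<in> W" by auto
    have "V \<noteq> {}" using less False by auto
    then obtain y where y: "y \<in> V" by auto
    define W' where "W' = W - {x, b x}"
    define V' where "V' = V - {y, a y}"
    have bx: "b x \<in> W" "b x \<noteq> x" "b (b x) = x" using less(3) x unfolding invol_def by auto
    have ay: "a y \<in> V" "a y \<noteq> y" "a (a y) = y" using less(5) y unfolding invol_def by auto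
    have iW: "invol W' b" using less(3) bx unfolding invol_def W'_def by (auto; metis)
    have iV: "invol V' a" using less(5) ay unfolding invol_def V'_def by (auto; metis)
    have cW: "card W' = card W - 2" unfolding W'_def using bx x less(2) by (simp add: card_Diff_subset)
    have cV: "card V' = card V - 2" unfolding V'_def using ay y less(4) by (simp add: card_Diff_subset)
    have "card {x, b x} \<le> card W" using bx x less(2) by (intro card_mono) auto
    then have "card W \<ge> 2" using bx by simp
    then have lt: "card W' < card W" using cW by simp
    obtain f' where f': "bij_betw f' W' V'" "\<forall>z\<in>W'. f' (b z) = a (f' z)"
      using less(1)[OF lt _ iW _ iV] less(2,4,6) cW cV W'_def V'_def by auto
    define f where "f = (\<lambda>z. if z = x then y else if z = b x then a y else f' z)"
    have b1: "bij_betw f W' V'"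
      using f'(1) by (rule bij_betw_cong[THEN iffD1, rotated]) (auto simp: f_def W'_def)
    have b2: "bij_betw f {x, b x} {y, a y}"
      using bx ay by (auto simp: bij_betw_def f_def inj_on_def)
    have "bij_betw f (W' \<union> {x, b x}) (V' \<union> {y, a y})"
      by (rule bij_betw_combine[OF b1 b2]) (auto simp: V'_def)
    moreover have "W' \<union> {x, b x} = W" "V' \<union> {y, a y} = V" using x bx y ay
      by (auto simp: W'_def V'_def)
    moreover have "\<forall>z\<in>W. f (b z) = a (f z)"
    proof
      fix z assume z: "z \<in> W"
      show "f (b z) = a (f z)"
      proof (cases "z = x \<or> z = b x")
        case True then show ?thesis using bx ay by (auto simp: f_def)
      next
        case False
        then have zW: "z \<in> W'" using z by (auto simp: W'_def)
        then have "b z \<in> W'" using iW unfolding invol_def by auto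
        then show ?thesis using zW f'(2) by (auto simp: f_def W'_def)
      qed
    qed
    ultimately show ?thesis by metis
  qed
qed

lemma cross_iso:
  assumes "bij_betw f W V" "\<forall>x\<in>W. f (b x) = a (f x)" "invol W b"
  shows "complex_iso (cross W b) (cross V a)"
proof -
  have inj: "inj_on f W" using assms(1) bij_betw_def by auto
  have U: "\<Union>(cross W b) \<subseteq> W" by (auto simp: cross_def)
  have "(`) ((`) f) (cross W b) = cross V a"
  proof
    show "(`) ((`) f) (cross W b) \<subseteq> cross V a"
    proof
      fix G assume "G \<in> (`) ((`) f) (cross W b)"
      then obtain F where F: "F \<subseteq> W" "\<forall>x\<in>F. b x \<notin> F" "G = f ` F" by (auto simp: cross_def)
      have "G \<subseteq> V" using F assms(1) by (auto simp: bij_betw_def)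
      moreover have "\<forall>y\<in>G. a y \<notin> G"
      proof (intro ballI notI)
        fix y assume y: "y \<in> G" "a y \<in> G"
        then obtain x x' where "x \<in> F" "y = f x" "x' \<in> F" "a y = f x'" using F by auto
        then have "f (b x) = f x'" using assms(2) F by auto
        then have "b x = x'" using inj assms(3) F \<open>x \<in> F\<close> \<open>x' \<in> F\<close> unfolding invol_def
          by (meson inj_onD subsetD)
        then show False using F \<open>x \<in> F\<close> \<open>x' \<in> F\<close> by auto
      qed
      ultimately show "G \<in> cross V a" by (auto simp: cross_def)
    qed
  next
    show "cross V a \<subseteq> (`) ((`) f) (cross W b)"
    proof
      fix G assume G: "G \<in> cross V a"
      define F where "F = W \<inter> f -` G"
      have GV: "G \<subseteq> V" using G by (auto simp: cross_def)
      have "f ` F = G" using GV assms(1) unfolding F_def bij_betw_def by auto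
      moreover have "F \<in> cross W b"
        unfolding cross_def F_def using G assms(2,3) unfolding invol_def cross_def by auto
      ultimately show "G \<in> (`) ((`) f) (cross W b)" by auto
    qed
  qed
  then show ?thesis unfolding complex_iso_def using inj U by (meson inj_on_subset)
qed



definition a0 :: "nat \<Rightarrow> nat" where
  "a0 x = (if x = 0 then 2 else if x = 2 then 0 else if x = 1 then 3 else if x = 3 then 1 else x)"

lemma Z4_cross: "Z4 = cross {0,1,2,3} a0"
proof
  show "Z4 \<subseteq> cross {0,1,2,3} a0" unfolding Z4_def cross_def by (auto simp: a0_def)
next
  show "cross {0,1,2,3} a0 \<subseteq> Z4"
  proof
    fix F assume F: "F \<in> cross {0,1,2,3::nat} a0"
    then have sub: "F \<subseteq> {0,1,2,3}" and n02: "\<not> (0 \<in> F \<and> 2 \<in> F)" and n13: "\<not> (1 \<in> F \<and> 3 \<in> F)"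
      unfolding cross_def by (auto simp: a0_def)
    have eq: "F = (if 0 \<in> F then {0} else {}) \<union> (if 1 \<in> F then {1} else {}) \<union>
       (if 2 \<in> F then {2} else {}) \<union> (if 3 \<in> F then {3} else {})"
      using sub by auto
    show "F \<in> Z4"
      apply (subst eq)
      using n02 n13 unfolding Z4_def
      by (cases "0 \<in> F"; cases "1 \<in> F"; cases "2 \<in> F"; cases "3 \<in> F") (simp_all add: insert_commute)
  qed
qed

lemma invol_a0: "invol {0,1,2,3} a0" by (auto simp: invol_def a0_def)

definition sa :: "(nat \<Rightarrow> nat) \<Rightarrow> nat \<Rightarrow> nat" where
  "sa a x = (if x = 0 then 1 else if x = 1 then 0 else a (x - 2) + 2)"

lemma susp_cross:
  assumes "invol V a"
  shows "suspension (cross V a) = cross ({0,1} \<union> (\<lambda>x. x + 2) ` V) (sa a)"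
proof
  show "suspension (cross V a) \<subseteq> cross ({0,1} \<union> (\<lambda>x. x + 2) ` V) (sa a)"
  proof
    fix H assume "H \<in> suspension (cross V a)"
    then obtain F G0 where H: "H = F \<union> (\<lambda>x. x + 2) ` G0" "F \<in> {{},{0},{1}}" "G0 \<subseteq> V"
      "\<forall>x\<in>G0. a x \<notin> G0"
      unfolding suspension_def join_def cross_def by auto
    show "H \<in> cross ({0,1} \<union> (\<lambda>x. x + 2) ` V) (sa a)"
      unfolding cross_def
    proof (intro CollectI conjI ballI)
      show "H \<subseteq> {0,1} \<union> (\<lambda>x. x + 2) ` V" using H by auto
    next
      fix x assume x: "x \<in> H"
      show "sa a x \<notin> H"
      proof (cases "x < 2")
        case True then show ?thesis using H x by (auto simp: sa_def)
      next
        case False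
        then obtain y where y: "y \<in> G0" "x = y + 2" using H x by auto
        then have "sa a x = a y + 2" by (simp add: sa_def)
        then show ?thesis using H y by auto
      qed
    qed
  qed
next
  show "cross ({0,1} \<union> (\<lambda>x. x + 2) ` V) (sa a) \<subseteq> suspension (cross V a)"
  proof
    fix H assume H: "H \<in> cross ({0,1} \<union> (\<lambda>x. x + 2) ` V) (sa a)"
    define F where "F = H \<inter> {0,1}"
    define G0 where "G0 = (\<lambda>x. x - 2) ` (H - {0,1})"
    have HV: "H \<subseteq> {0,1} \<union> (\<lambda>x. x + 2) ` V" and anti: "\<forall>x\<in>H. sa a x \<notin> H"
      using H by (auto simp: cross_def)
    have "\<not> (0 \<in> H \<and> 1 \<in> H)" using anti by (auto simp: sa_def)
    then have F: "F \<in> {{},{0},{1}}" unfolding F_def by auto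
    have ge: "\<forall>x\<in>H - {0,1}. x \<ge> 2" by auto
    have img: "(\<lambda>x. x + 2) ` G0 = H - {0,1}"
    proof -
      have "(\<lambda>x. x - 2 + 2) ` (H - {0,1}) = (\<lambda>x. x) ` (H - {0,1})"
        by (rule image_cong) (use ge in auto)
      then show ?thesis unfolding G0_def image_image by simp
    qed
    have G0V: "G0 \<subseteq> V" unfolding G0_def using HV by auto
    have "\<forall>y\<in>G0. a y \<notin> G0"
    proof (intro ballI notI)
      fix y assume y: "y \<in> G0" "a y \<in> G0"
      then have "y + 2 \<in> H" "a y + 2 \<in> H" using img by auto
      moreover have "sa a (y + 2) = a y + 2" by (simp add: sa_def)
      ultimately show False using anti by metis
    qed
    then have "G0 \<in> cross V a" using G0V by (auto simp: cross_def)
    moreover have "H = F \<union> (\<lambda>x. x + 2) ` G0" using img unfolding F_def by auto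
    ultimately show "H \<in> suspension (cross V a)"
      unfolding suspension_def join_def using F by blast
  qed
qed

lemma susp_invol:
  assumes "invol V a" "finite V"
  shows "invol ({0,1} \<union> (\<lambda>x. x + 2) ` V) (sa a)" "finite ({0,1} \<union> (\<lambda>x. x + 2) ` V)"
    "card ({0,1} \<union> (\<lambda>x. x + 2) ` V) = card V + 2"
proof -
  show "invol ({0,1} \<union> (\<lambda>x. x + 2) ` V) (sa a)"
    using assms(1) unfolding invol_def sa_def by auto
  show "finite ({0,1} \<union> (\<lambda>x. x + 2) ` V)" using assms(2) by auto
  have "card ((\<lambda>x. x + 2) ` V) = card V" by (simp add: card_image inj_on_def)
  moreover have "{0,1} \<inter> (\<lambda>x. x + 2) ` V = {}" by auto
  ultimately show "card ({0,1} \<union> (\<lambda>x. x + 2) ` V) = card V + 2"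
    using assms(2) by (simp add: card_Un_disjoint)
qed

lemma susp_iter: "\<exists>V a. finite V \<and> invol V a \<and> card V = 2 * n + 4 \<and> (suspension ^^ n) Z4 = cross V a"
proof (induction n)
  case 0
  show ?case using Z4_cross invol_a0 by (intro exI[of _ "{0,1,2,3}"] exI[of _ a0]) auto
next
  case (Suc n)
  then obtain V a where "finite V" "invol V a" "card V = 2 * n + 4" "(suspension ^^ n) Z4 = cross V a"
    by auto
  then show ?case using susp_cross susp_invol
    by (intro exI[of _ "{0,1} \<union> (\<lambda>x. x + 2) ` V"] exI[of _ "sa a"]) auto
qed



lemma vertices_cross: "invol W b \<Longrightarrow> vertices (cross W b) = W"
  unfolding vertices_def cross_def invol_def by auto

definition idx :: "nat + nat \<Rightarrow> nat" where "idx x = (case x of Inl i \<Rightarrow> i | Inr i \<Rightarrow> i)"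
definition sw :: "nat + nat \<Rightarrow> nat + nat" where "sw x = (case x of Inl i \<Rightarrow> Inr i | Inr i \<Rightarrow> Inl i)"

lemma card_two_copies: "finite A \<Longrightarrow> card (Inl ` A \<union> Inr ` A) = 2 * card A"
proof -
  assume "finite A"
  moreover have "Inl ` A \<inter> Inr ` A = {}" by auto
  ultimately show ?thesis by (simp add: card_Un_disjoint card_image)
qed

lemma cross_colorable:
  fixes W :: "'a set"
  assumes "finite W" "invol W b" "card W = 2 * k"
  shows "\<exists>c::'a \<Rightarrow> nat. (\<forall>v\<in>W. c v < k) \<and> (\<forall>u v. {u,v} \<in> cross W b \<longrightarrow> u \<noteq> v \<longrightarrow> c u \<noteq> c v)"
proof -
  define V0 where "V0 = Inl ` {..<k} \<union> Inr ` {..<k}"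
  have iV: "invol V0 sw" unfolding V0_def invol_def sw_def by auto
  have cV: "card V0 = 2 * k" unfolding V0_def by (simp add: card_two_copies)
  obtain f where f: "bij_betw f W V0" "\<forall>x\<in>W. f (b x) = sw (f x)"
    using equiv_bij[OF assms(1,2) _ iV] cV assms(3) V0_def by auto
  define c where "c x = idx (f x)" for x
  have "\<forall>v\<in>W. c v < k"
  proof
    fix v assume "v \<in> W"
    then have "f v \<in> V0" using f(1) by (auto simp: bij_betw_def)
    then show "c v < k" unfolding c_def V0_def idx_def by auto
  qed
  moreover have "\<forall>u v. {u,v} \<in> cross W b \<longrightarrow> u \<noteq> v \<longrightarrow> c u \<noteq> c v"
  proof (intro allI impI notI)
    fix u v assume uv: "{u,v} \<in> cross W b" "u \<noteq> v" "c u = c v"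
    then have W: "u \<in> W" "v \<in> W" "b u \<noteq> v" unfolding cross_def by auto
    have "f u \<noteq> f v" using W uv(2) f(1) by (metis bij_betw_def inj_onD)
    moreover have "f v \<noteq> sw (f u)"
    proof
      assume "f v = sw (f u)"
      then have "f v = f (b u)" using f(2) W by auto
      moreover have "b u \<in> W" using assms(2) W unfolding invol_def by auto
      ultimately show False using W f(1) by (metis bij_betw_def inj_onD)
    qed
    moreover have "idx (f u) = idx (f v)" using uv(3) c_def by simp
    ultimately show False
      by (cases "f u"; cases "f v") (auto simp: idx_def sw_def)
  qed
  ultimately show ?thesis by blast
qed

lemma bier_char: "H \<in> bier m K \<longleftrightarrow> {i. Inl i \<in> H} \<in> K \<and> {j. Inr j \<in> H} \<in> alex_dual m K \<and>
   {i. Inl i \<in> H} \<inter> {j. Inr j \<in> H} = {}"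
proof
  assume "H \<in> bier m K"
  then obtain I J where "H = Inl ` I \<union> Inr ` J" "I \<in> K" "J \<in> alex_dual m K" "I \<inter> J = {}"
    unfolding bier_def by auto
  moreover have "{i. Inl i \<in> Inl ` I \<union> Inr ` J} = I" "{i. Inr i \<in> Inl ` I \<union> Inr ` J} = J" by auto
  ultimately show "{i. Inl i \<in> H} \<in> K \<and> {j. Inr j \<in> H} \<in> alex_dual m K \<and>
   {i. Inl i \<in> H} \<inter> {j. Inr j \<in> H} = {}" by simp
next
  assume a: "{i. Inl i \<in> H} \<in> K \<and> {j. Inr j \<in> H} \<in> alex_dual m K \<and>
   {i. Inl i \<in> H} \<inter> {j. Inr j \<in> H} = {}"
  have "H = Inl ` {i. Inl i \<in> H} \<union> Inr ` {j. Inr j \<in> H}"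
  proof (rule set_eqI)
    fix x show "x \<in> H \<longleftrightarrow> x \<in> Inl ` {i. Inl i \<in> H} \<union> Inr ` {j. Inr j \<in> H}"
      by (cases x) auto
  qed
  then show "H \<in> bier m K" unfolding bier_def using a by blast
qed

definition bsw :: "nat \<Rightarrow> nat \<Rightarrow> nat + nat \<Rightarrow> nat + nat" where
  "bsw p q x = (case x of Inl i \<Rightarrow> if i = p then Inl q else if i = q then Inl p else Inr i
                        | Inr i \<Rightarrow> if i = p then Inr q else if i = q then Inr p else Inl i)"


lemma sum_set_eq: "(H :: ('a + 'b) set) = Inl ` {i. Inl i \<in> H} \<union> Inr ` {j. Inr j \<in> H}"
proof (rule set_eqI)
  fix x show "x \<in> H \<longleftrightarrow> x \<in> Inl ` {i. Inl i \<in> H} \<union> Inr ` {j. Inr j \<in> H}"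
    by (cases x) auto
qed

lemma subset_sum: "(H :: ('a + 'b) set) \<subseteq> Inl ` A \<union> Inr ` B \<longleftrightarrow> {i. Inl i \<in> H} \<subseteq> A \<and> {j. Inr j \<in> H} \<subseteq> B"
proof
  assume "H \<subseteq> Inl ` A \<union> Inr ` B" then show "{i. Inl i \<in> H} \<subseteq> A \<and> {j. Inr j \<in> H} \<subseteq> B" by auto
next
  assume "{i. Inl i \<in> H} \<subseteq> A \<and> {j. Inr j \<in> H} \<subseteq> B"
  then show "H \<subseteq> Inl ` A \<union> Inr ` B" by (subst sum_set_eq) auto
qed

lemma ball_sum: "(\<forall>x\<in>(H :: ('a + 'b) set). P x) \<longleftrightarrow> (\<forall>i. Inl i \<in> H \<longrightarrow> P (Inl i)) \<and> (\<forall>j. Inr j \<in> H \<longrightarrow> P (Inr j))"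
proof
  assume "\<forall>x\<in>H. P x" then show "(\<forall>i. Inl i \<in> H \<longrightarrow> P (Inl i)) \<and> (\<forall>j. Inr j \<in> H \<longrightarrow> P (Inr j))" by auto
next
  assume a: "(\<forall>i. Inl i \<in> H \<longrightarrow> P (Inl i)) \<and> (\<forall>j. Inr j \<in> H \<longrightarrow> P (Inr j))"
  show "\<forall>x\<in>H. P x"
  proof
    fix x assume "x \<in> H" then show "P x" using a by (cases x) auto
  qed
qed

lemma ball_sum2: "(\<forall>x\<in>Inl ` A \<union> Inr ` B. P x) \<longleftrightarrow> (\<forall>i\<in>A. P (Inl i)) \<and> (\<forall>j\<in>B. P (Inr j))"
  by auto

lemma cross_sum_char: "H \<in> cross (Inl ` A \<union> Inr ` B) b \<longleftrightarrow>
   {i. Inl i \<in> H} \<subseteq> A \<and> {j. Inr j \<in> H} \<subseteq> B \<and>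
   (\<forall>i\<in>{i. Inl i \<in> H}. b (Inl i) \<notin> H) \<and> (\<forall>j\<in>{j. Inr j \<in> H}. b (Inr j) \<notin> H)"
  unfolding cross_def mem_Collect_eq subset_sum ball_sum by blast

lemma bsw_Inl: "i \<noteq> p \<Longrightarrow> i \<noteq> q \<Longrightarrow> bsw p q (Inl i) = Inr i"
  and bsw_Inr: "i \<noteq> p \<Longrightarrow> i \<noteq> q \<Longrightarrow> bsw p q (Inr i) = Inl i"
  and bsw_pl: "bsw p q (Inl p) = Inl q" and bsw_ql: "bsw p q (Inl q) = Inl p"
  and bsw_pr: "bsw p q (Inr p) = Inr q" and bsw_qr: "bsw p q (Inr q) = Inr p"
  by (auto simp: bsw_def)

lemma case1:
  assumes "p \<in> {1..m}" "K = Pow ({1..m} - {p})"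
  shows "invol (Inl ` ({1..m} - {p}) \<union> Inr ` ({1..m} - {p})) (bsw p p)"
    "finite (Inl ` ({1..m} - {p}) \<union> Inr ` ({1..m} - {p}))"
    "card (Inl ` ({1..m} - {p}) \<union> Inr ` ({1..m} - {p})) = 2 * (m - 1)"
proof -
  let ?S = "{1..m} - {p}"
  have ad: "alex_dual m K = Pow ?S" unfolding alex_dual_def assms(2) using assms(1) by auto
  show "invol (Inl ` ?S \<union> Inr ` ?S) (bsw p p)" unfolding invol_def ball_sum2 by (auto simp: bsw_def)
  show "finite (Inl ` ?S \<union> Inr ` ?S)" by auto
  show "card (Inl ` ?S \<union> Inr ` ?S) = 2 * (m - 1)" using assms(1) by (simp add: card_two_copies)
qed

lemma case2:
  assumes "p \<in> {1..m}" "q \<in> {1..m}" "p \<noteq> q" "K = Pow ({1..m} - {p, q})"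
  shows "invol (Inl ` ({1..m} - {p, q}) \<union> Inr ` {1..m}) (bsw p q)"
    "finite (Inl ` ({1..m} - {p, q}) \<union> Inr ` {1..m})"
    "card (Inl ` ({1..m} - {p, q}) \<union> Inr ` {1..m}) = 2 * (m - 1)"
proof -
  let ?T = "{1..m} - {p, q}"
  have ad: "alex_dual m K = {J. J \<subseteq> {1..m} \<and> \<not> (p \<in> J \<and> q \<in> J)}"
    unfolding alex_dual_def assms(4) using assms(1,2) by auto
  show "invol (Inl ` ?T \<union> Inr ` {1..m}) (bsw p q)" using assms unfolding invol_def ball_sum2 by (auto simp: bsw_def)
  show "finite (Inl ` ?T \<union> Inr ` {1..m})" by auto
  have "card ?T = m - 2" using assms by (simp add: card_Diff_subset)
  moreover have "Inl ` ?T \<inter> Inr ` {1..m} = {}" by auto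
  ultimately show "card (Inl ` ?T \<union> Inr ` {1..m}) = 2 * (m - 1)"
    using assms by (simp add: card_Un_disjoint card_image)
qed

lemma case3:
  assumes "p \<in> {1..m}" "q \<in> {1..m}" "p \<noteq> q" "K = {F. F \<subseteq> {1..m} \<and> \<not> (p \<in> F \<and> q \<in> F)}"
  shows "invol (Inl ` {1..m} \<union> Inr ` ({1..m} - {p, q})) (bsw p q)"
    "finite (Inl ` {1..m} \<union> Inr ` ({1..m} - {p, q}))"
    "card (Inl ` {1..m} \<union> Inr ` ({1..m} - {p, q})) = 2 * (m - 1)"
proof -
  let ?T = "{1..m} - {p, q}"
  have ad: "alex_dual m K = Pow ?T"
    unfolding alex_dual_def assms(4) using assms(1,2) by auto
  show "invol (Inl ` {1..m} \<union> Inr ` ?T) (bsw p q)" using assms unfolding invol_def ball_sum2 by (auto simp: bsw_def)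
  show "finite (Inl ` {1..m} \<union> Inr ` ?T)" by auto
  have "card ?T = m - 2" using assms by (simp add: card_Diff_subset)
  moreover have "Inl ` {1..m} \<inter> Inr ` ?T = {}" by auto
  ultimately show "card (Inl ` {1..m} \<union> Inr ` ?T) = 2 * (m - 1)"
    using assms by (simp add: card_Un_disjoint card_image)
qed


lemma bsw_Inr_eq: "bsw p q (Inr j) = (if j = p then Inr q else if j = q then Inr p else Inl j)"
  and bsw_Inl_eq: "bsw p q (Inl j) = (if j = p then Inl q else if j = q then Inl p else Inr j)"
  by (simp_all add: bsw_def)

lemma bier1:
  assumes "p \<in> {1..m}" "K = Pow ({1..m} - {p})"
  shows "bier m K = cross (Inl ` ({1..m} - {p}) \<union> Inr ` ({1..m} - {p})) (bsw p p)"
proof -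
  let ?S = "{1..m} - {p}"
  have ad: "alex_dual m K = Pow ?S" unfolding alex_dual_def assms(2) using assms(1) by auto
  show ?thesis
  proof (rule set_eqI)
    fix H :: "(nat + nat) set"
    define L where "L = {i. Inl i \<in> H}"
    define R where "R = {j. Inr j \<in> H}"
    have "H \<in> bier m K \<longleftrightarrow> L \<subseteq> ?S \<and> R \<subseteq> ?S \<and> L \<inter> R = {}"
      unfolding bier_char ad L_def R_def by (auto simp: assms(2))
    also have "\<dots> \<longleftrightarrow> L \<subseteq> ?S \<and> R \<subseteq> ?S \<and> (\<forall>i\<in>L. bsw p p (Inl i) \<notin> H) \<and> (\<forall>j\<in>R. bsw p p (Inr j) \<notin> H)"
    proof (cases "L \<subseteq> ?S \<and> R \<subseteq> ?S")
      case True
      have e1: "bsw p p (Inl i) = Inr i" if "i \<in> L" for i using True that by (intro bsw_Inl) auto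
      have e2: "bsw p p (Inr i) = Inl i" if "i \<in> R" for i using True that by (intro bsw_Inr) auto
      show ?thesis using True e1 e2 unfolding L_def R_def by auto
    qed auto
    also have "\<dots> \<longleftrightarrow> H \<in> cross (Inl ` ?S \<union> Inr ` ?S) (bsw p p)"
      unfolding cross_sum_char L_def R_def by simp
    finally show "H \<in> bier m K \<longleftrightarrow> H \<in> cross (Inl ` ?S \<union> Inr ` ?S) (bsw p p)" .
  qed
qed
lemma bier2:
  assumes "p \<in> {1..m}" "q \<in> {1..m}" "p \<noteq> q" "K = Pow ({1..m} - {p, q})"
  shows "bier m K = cross (Inl ` ({1..m} - {p, q}) \<union> Inr ` {1..m}) (bsw p q)"
proof -
  let ?T = "{1..m} - {p, q}"
  have ad: "alex_dual m K = {J. J \<subseteq> {1..m} \<and> \<not> (p \<in> J \<and> q \<in> J)}"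
    unfolding alex_dual_def assms(4) using assms(1,2) by auto
  show ?thesis
  proof (rule set_eqI)
    fix H :: "(nat + nat) set"
    define L where "L = {i. Inl i \<in> H}"
    define R where "R = {j. Inr j \<in> H}"
    have "H \<in> bier m K \<longleftrightarrow> L \<subseteq> ?T \<and> R \<subseteq> {1..m} \<and> \<not> (p \<in> R \<and> q \<in> R) \<and> L \<inter> R = {}"
      unfolding bier_char ad L_def R_def by (auto simp: assms(4))
    also have "\<dots> \<longleftrightarrow> L \<subseteq> ?T \<and> R \<subseteq> {1..m} \<and> (\<forall>i\<in>L. bsw p q (Inl i) \<notin> H) \<and> (\<forall>j\<in>R. bsw p q (Inr j) \<notin> H)"
    proof (cases "L \<subseteq> ?T \<and> R \<subseteq> {1..m}")
      case True
      have e1: "bsw p q (Inl i) = Inr i" if "i \<in> L" for i using True that by (intro bsw_Inl) auto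
      have e2: "bsw p q (Inr i) = Inl i" if "i \<noteq> p" "i \<noteq> q" for i using that by (intro bsw_Inr) auto
      have A: "(\<forall>i\<in>L. bsw p q (Inl i) \<notin> H) \<longleftrightarrow> L \<inter> R = {}"
        using e1 unfolding R_def by auto
      have B: "(\<forall>j\<in>R. bsw p q (Inr j) \<notin> H) \<longleftrightarrow> \<not> (p \<in> R \<and> q \<in> R)" if LR: "L \<inter> R = {}"
      proof
        assume "\<forall>j\<in>R. bsw p q (Inr j) \<notin> H"
        then show "\<not> (p \<in> R \<and> q \<in> R)" unfolding R_def by (auto simp: bsw_pr)
      next
        assume n: "\<not> (p \<in> R \<and> q \<in> R)"
        show "\<forall>j\<in>R. bsw p q (Inr j) \<notin> H"
        proof
          fix j assume j: "j \<in> R"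
          show "bsw p q (Inr j) \<notin> H"
          proof (cases "j = p")
            case True then show ?thesis using n j unfolding R_def by (simp add: bsw_pr)
          next
            case False
            show ?thesis
            proof (cases "j = q")
              case True then show ?thesis using n j unfolding R_def by (simp add: bsw_qr)
            next
              case False
              then have "bsw p q (Inr j) = Inl j" using \<open>j \<noteq> p\<close> by (rule_tac bsw_Inr) auto
              then show ?thesis using LR j unfolding L_def by auto
            qed
          qed
        qed
      qed
      show ?thesis using A B by blast
    qed auto
    also have "\<dots> \<longleftrightarrow> H \<in> cross (Inl ` ?T \<union> Inr ` {1..m}) (bsw p q)"
      unfolding cross_sum_char L_def R_def by simp
    finally show "H \<in> bier m K \<longleftrightarrow> H \<in> cross (Inl ` ?T \<union> Inr ` {1..m}) (bsw p q)" .
  qed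
qed

lemma bier3:
  assumes "p \<in> {1..m}" "q \<in> {1..m}" "p \<noteq> q" "K = {F. F \<subseteq> {1..m} \<and> \<not> (p \<in> F \<and> q \<in> F)}"
  shows "bier m K = cross (Inl ` {1..m} \<union> Inr ` ({1..m} - {p, q})) (bsw p q)"
proof -
  let ?T = "{1..m} - {p, q}"
  have ad: "alex_dual m K = Pow ?T"
    unfolding alex_dual_def assms(4) using assms(1,2) by auto
  show ?thesis
  proof (rule set_eqI)
    fix H :: "(nat + nat) set"
    define L where "L = {i. Inl i \<in> H}"
    define R where "R = {j. Inr j \<in> H}"
    have "H \<in> bier m K \<longleftrightarrow> L \<subseteq> {1..m} \<and> \<not> (p \<in> L \<and> q \<in> L) \<and> R \<subseteq> ?T \<and> L \<inter> R = {}"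
      unfolding bier_char ad L_def R_def by (auto simp: assms(4))
    also have "\<dots> \<longleftrightarrow> L \<subseteq> {1..m} \<and> R \<subseteq> ?T \<and> (\<forall>i\<in>L. bsw p q (Inl i) \<notin> H) \<and> (\<forall>j\<in>R. bsw p q (Inr j) \<notin> H)"
    proof (cases "L \<subseteq> {1..m} \<and> R \<subseteq> ?T")
      case True
      have e1: "bsw p q (Inr i) = Inl i" if "i \<in> R" for i using True that by (intro bsw_Inr) auto
      have e2: "bsw p q (Inl i) = Inr i" if "i \<noteq> p" "i \<noteq> q" for i using that by (intro bsw_Inl) auto
      have A: "(\<forall>i\<in>R. bsw p q (Inr i) \<notin> H) \<longleftrightarrow> L \<inter> R = {}"
        using e1 unfolding L_def by auto
      have B: "(\<forall>j\<in>L. bsw p q (Inl j) \<notin> H) \<longleftrightarrow> \<not> (p \<in> L \<and> q \<in> L)" if LR: "L \<inter> R = {}"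
      proof
        assume "\<forall>j\<in>L. bsw p q (Inl j) \<notin> H"
        then show "\<not> (p \<in> L \<and> q \<in> L)" unfolding L_def by (auto simp: bsw_pl)
      next
        assume n: "\<not> (p \<in> L \<and> q \<in> L)"
        show "\<forall>j\<in>L. bsw p q (Inl j) \<notin> H"
        proof
          fix j assume j: "j \<in> L"
          show "bsw p q (Inl j) \<notin> H"
          proof (cases "j = p")
            case True then show ?thesis using n j unfolding L_def by (simp add: bsw_pl)
          next
            case False
            show ?thesis
            proof (cases "j = q")
              case True then show ?thesis using n j unfolding L_def by (simp add: bsw_ql)
            next
              case False
              then have "bsw p q (Inl j) = Inr j" using \<open>j \<noteq> p\<close> by (rule_tac bsw_Inl) auto
              then show ?thesis using LR j unfolding R_def by auto
            qed
          qed
        qed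
      qed
      show ?thesis using A B by blast
    qed auto
    also have "\<dots> \<longleftrightarrow> H \<in> cross (Inl ` {1..m} \<union> Inr ` ?T) (bsw p q)"
      unfolding cross_sum_char L_def R_def by simp
    finally show "H \<in> bier m K \<longleftrightarrow> H \<in> cross (Inl ` {1..m} \<union> Inr ` ?T) (bsw p q)" .
  qed
qed


definition Pgood :: "nat \<Rightarrow> nat set set \<Rightarrow> bool" where
  "Pgood m K \<longleftrightarrow> (\<exists>p q. p \<in> {1..m} \<and> q \<in> {1..m} \<and>
     (K = Pow ({1..m} - {p}) \<or> (p \<noteq> q \<and> K = Pow ({1..m} - {p, q})) \<or>
      (p \<noteq> q \<and> K = Pow ({1..m} - {p}) \<union> Pow ({1..m} - {q}))))"

lemma pow_union_form: "Pow (A - {p}) \<union> Pow (A - {q}) = {F. F \<subseteq> A \<and> \<not> (p \<in> F \<and> q \<in> F)}"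
  by auto

lemma img_inv:
  assumes "\<sigma> permutes S"
  shows "(`) ((`) \<sigma>) K = Y \<longleftrightarrow> K = (`) ((`) (inv \<sigma>)) Y"
proof -
  have a: "inv \<sigma> \<circ> \<sigma> = id" "\<sigma> \<circ> inv \<sigma> = id" using permutes_inv_o[OF assms] by auto
  have "(`) ((`) (inv \<sigma>)) ((`) ((`) \<sigma>) K) = K"
    by (simp add: image_comp a)
  moreover have "(`) ((`) \<sigma>) ((`) ((`) (inv \<sigma>)) Y) = Y"
    by (simp add: image_comp a)
  ultimately show ?thesis by metis
qed

lemma img_Pow:
  assumes "\<sigma> permutes {1..m}"
  shows "(`) ((`) \<sigma>) (Pow ({1..m} - X)) = Pow ({1..m} - \<sigma> ` X)"
proof -
  have inj: "inj \<sigma>" using permutes_inj[OF assms] .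
  have e: "\<sigma> ` ({1..m} - X) = {1..m} - \<sigma> ` X"
    using image_set_diff[OF inj] permutes_image[OF assms] by simp
  have "(`) ((`) \<sigma>) (Pow A) = Pow (\<sigma> ` A)" for A
  proof
    show "(`) ((`) \<sigma>) (Pow A) \<subseteq> Pow (\<sigma> ` A)" by auto
    show "Pow (\<sigma> ` A) \<subseteq> (`) ((`) \<sigma>) (Pow A)"
    proof
      fix G assume "G \<in> Pow (\<sigma> ` A)"
      then obtain F where "F \<subseteq> A" "G = \<sigma> ` F" by (auto simp: subset_image_iff)
      then show "G \<in> (`) ((`) \<sigma>) (Pow A)" by auto
    qed
  qed
  then show ?thesis using e by simp
qed

lemma forms:
  fixes m :: nat
  assumes "m \<ge> 3"
  shows "{1..m-1} = {1..m} - {m}" "{1..m-2} = {1..m} - {m-1, m}"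
    "{1..m-2} \<union> {m} = {1..m} - {m-1}"
  using assms by auto

lemma formsP:
  fixes m :: nat
  assumes "m \<ge> 3"
  shows "Pow {1..m-1} = Pow ({1..m} - {m})" "Pow {1..m-2} = Pow ({1..m} - {m-1, m})"
    "Pow ({1..m-2} \<union> {m}) = Pow ({1..m} - {m-1})"
  using forms[OF assms] by simp_all

lemma perm_iff:
  fixes m :: nat
  assumes "m \<ge> 3"
  shows "(\<exists>\<sigma>. \<sigma> permutes {1..m} \<and>
              ((`) ((`) \<sigma>) K = Pow {1..m-1} \<or>
               (`) ((`) \<sigma>) K = Pow {1..m-2} \<or>
               (`) ((`) \<sigma>) K = Pow {1..m-1} \<union> Pow ({1..m-2} \<union> {m}))) \<longleftrightarrow> Pgood m K"
proof
  assume "\<exists>\<sigma>. \<sigma> permutes {1..m} \<and>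
              ((`) ((`) \<sigma>) K = Pow {1..m-1} \<or>
               (`) ((`) \<sigma>) K = Pow {1..m-2} \<or>
               (`) ((`) \<sigma>) K = Pow {1..m-1} \<union> Pow ({1..m-2} \<union> {m}))"
  then obtain \<sigma> where s: "\<sigma> permutes {1..m}" and
    d: "(`) ((`) \<sigma>) K = Pow {1..m-1} \<or>
               (`) ((`) \<sigma>) K = Pow {1..m-2} \<or>
               (`) ((`) \<sigma>) K = Pow {1..m-1} \<union> Pow ({1..m-2} \<union> {m})" by blast
  define \<tau> where "\<tau> = inv \<sigma>"
  have t: "\<tau> permutes {1..m}" unfolding \<tau>_def using permutes_inv[OF s] .
  have inj: "inj \<tau>" using permutes_inj[OF t] .
  have mm: "m \<in> {1..m}" "m - 1 \<in> {1..m}" "m - 1 \<noteq> m" using assms by auto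
  have tm: "\<tau> m \<in> {1..m}" "\<tau> (m-1) \<in> {1..m}" "\<tau> (m - 1) \<noteq> \<tau> m"
    using mm permutes_in_image[OF t] inj by (auto dest: injD)
  have d': "K = (`) ((`) \<tau>) (Pow {1..m-1}) \<or> K = (`) ((`) \<tau>) (Pow {1..m-2}) \<or>
     K = (`) ((`) \<tau>) (Pow {1..m-1} \<union> Pow ({1..m-2} \<union> {m}))"
    using d img_inv[OF s] unfolding \<tau>_def by metis
  then have "K = Pow ({1..m} - {\<tau> m}) \<or> K = Pow ({1..m} - {\<tau> m, \<tau> (m-1)}) \<or>
     K = Pow ({1..m} - {\<tau> m}) \<union> Pow ({1..m} - {\<tau> (m-1)})"
    unfolding formsP[OF assms] image_Un img_Pow[OF t] by (simp add: insert_commute)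
  then show "Pgood m K" unfolding Pgood_def using tm by blast
next
  assume "Pgood m K"
  then obtain p q where pq: "p \<in> {1..m}" "q \<in> {1..m}" and
    d: "K = Pow ({1..m} - {p}) \<or> (p \<noteq> q \<and> K = Pow ({1..m} - {p, q})) \<or>
      (p \<noteq> q \<and> K = Pow ({1..m} - {p}) \<union> Pow ({1..m} - {q}))"
    unfolding Pgood_def by blast
  have mm: "m \<in> {1..m}" "m - 1 \<in> {1..m}" "m - 1 \<noteq> m" using assms by auto
  show "\<exists>\<sigma>. \<sigma> permutes {1..m} \<and>
              ((`) ((`) \<sigma>) K = Pow {1..m-1} \<or>
               (`) ((`) \<sigma>) K = Pow {1..m-2} \<or>
               (`) ((`) \<sigma>) K = Pow {1..m-1} \<union> Pow ({1..m-2} \<union> {m}))"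
  proof (cases "K = Pow ({1..m} - {p})")
    case True
    define \<sigma> where "\<sigma> = transpose p m"
    have s: "\<sigma> permutes {1..m}" unfolding \<sigma>_def using pq mm by (intro permutes_swap_id) auto
    have "(`) ((`) \<sigma>) K = Pow {1..m-1}"
      unfolding True img_Pow[OF s] formsP[OF assms] by (simp add: \<sigma>_def)
    then show ?thesis using s by blast
  next
    case False
    then have pq': "p \<noteq> q" using d by auto
    define q' where "q' = transpose p m q"
    define \<sigma> where "\<sigma> = transpose q' (m - 1) \<circ> transpose p m"
    have q'm: "q' \<in> {1..m}" "q' \<noteq> m" unfolding q'_def using pq pq' mm
      by (auto simp: transpose_def)
    have s: "\<sigma> permutes {1..m}" unfolding \<sigma>_def using pq mm q'm
      by (intro permutes_compose permutes_swap_id) auto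
    have sp: "\<sigma> p = m" unfolding \<sigma>_def using q'm mm by (auto simp: transpose_def)
    have sq: "\<sigma> q = m - 1" unfolding \<sigma>_def q'_def by simp
    from d False pq' have "K = Pow ({1..m} - {p, q}) \<or> K = Pow ({1..m} - {p}) \<union> Pow ({1..m} - {q})"
      by auto
    then have "(`) ((`) \<sigma>) K = Pow ({1..m} - {m - 1, m}) \<or>
       (`) ((`) \<sigma>) K = Pow ({1..m} - {m}) \<union> Pow ({1..m} - {m - 1})"
    proof (elim disjE)
      assume K: "K = Pow ({1..m} - {p, q})"
      show ?thesis unfolding K img_Pow[OF s] by (simp add: sp sq insert_commute)
    next
      assume K: "K = Pow ({1..m} - {p}) \<union> Pow ({1..m} - {q})"
      show ?thesis unfolding K image_Un img_Pow[OF s] by (simp add: sp sq)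
    qed
    then have "(`) ((`) \<sigma>) K = Pow {1..m-2} \<or> (`) ((`) \<sigma>) K = Pow {1..m-1} \<union> Pow ({1..m-2} \<union> {m})"
      unfolding formsP[OF assms] .
    then show ?thesis using s by blast
  qed
qed



definition colorable :: "'a set set \<Rightarrow> nat \<Rightarrow> bool" where
  "colorable L n \<longleftrightarrow> (\<exists>c :: 'a \<Rightarrow> nat.
      (\<forall>v\<in>vertices L. c v < n) \<and> (\<forall>u v. {u, v} \<in> L \<longrightarrow> u \<noteq> v \<longrightarrow> c u \<noteq> c v))"

lemma chrom_eq: "chromatic_number L = (LEAST n. colorable L n)"
  unfolding chromatic_number_def colorable_def by simp

lemma good_cross:
  assumes "Pgood m K"
  shows "\<exists>W b. finite W \<and> invol W b \<and> card W = 2 * (m - 1) \<and> bier m K = cross W b"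
proof -
  obtain p q where pq: "p \<in> {1..m}" "q \<in> {1..m}" and
    d: "K = Pow ({1..m} - {p}) \<or> (p \<noteq> q \<and> K = Pow ({1..m} - {p, q})) \<or>
      (p \<noteq> q \<and> K = Pow ({1..m} - {p}) \<union> Pow ({1..m} - {q}))"
    using assms unfolding Pgood_def by blast
  from d show ?thesis
  proof (elim disjE conjE)
    assume K: "K = Pow ({1..m} - {p})"
    show ?thesis using case1[OF pq(1) K] bier1[OF pq(1) K] by blast
  next
    assume K: "K = Pow ({1..m} - {p, q})" and ne: "p \<noteq> q"
    show ?thesis using case2[OF pq ne K] bier2[OF pq ne K] by blast
  next
    assume K: "K = Pow ({1..m} - {p}) \<union> Pow ({1..m} - {q})" and ne: "p \<noteq> q"
    then have K': "K = {F. F \<subseteq> {1..m} \<and> \<not> (p \<in> F \<and> q \<in> F)}" using pow_union_form by simp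
    show ?thesis using case3[OF pq ne K'] bier3[OF pq ne K'] by blast
  qed
qed

lemma good_col:
  assumes "Pgood m K"
  shows "colorable (bier m K) (m - 1)"
proof -
  obtain W b where W: "finite W" "invol W b" "card W = 2 * (m - 1)" "bier m K = cross W b"
    using good_cross[OF assms] by blast
  show ?thesis using cross_colorable[OF W(1,2,3)] W(4) vertices_cross[OF W(2)]
    unfolding colorable_def by auto
qed

lemma good_iso:
  assumes "m \<ge> 3" "Pgood m K"
  shows "complex_iso (bier m K) ((suspension ^^ (m - 3)) Z4)"
proof -
  obtain W b where W: "finite W" "invol W b" "card W = 2 * (m - 1)" "bier m K = cross W b"
    using good_cross[OF assms(2)] by blast
  obtain V a where V: "finite V" "invol V a" "card V = 2 * (m - 3) + 4" "(suspension ^^ (m - 3)) Z4 = cross V a"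
    using susp_iter by blast
  have "card W = card V" using W(3) V(3) assms(1) by simp
  then obtain f where "bij_betw f W V" "\<forall>x\<in>W. f (b x) = a (f x)"
    using equiv_bij[OF W(1,2) V(1,2)] by blast
  then show ?thesis using cross_iso W(2,4) V(4) by metis
qed



lemma sc_facts:
  assumes "simplicial_complex_on m K" "K \<noteq> Pow {1..m}"
  shows "{} \<in> K" "{1..m} \<notin> K" "\<And>F. F \<in> K \<Longrightarrow> F \<subseteq> {1..m}" "\<And>F G. F \<in> K \<Longrightarrow> G \<subseteq> F \<Longrightarrow> G \<in> K"
proof -
  show sub: "\<And>F. F \<in> K \<Longrightarrow> F \<subseteq> {1..m}" using assms(1) unfolding simplicial_complex_on_def by blast
  show down: "\<And>F G. F \<in> K \<Longrightarrow> G \<subseteq> F \<Longrightarrow> G \<in> K" using assms(1) unfolding simplicial_complex_on_def by blast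
  show "{} \<in> K" using assms(1) unfolding simplicial_complex_on_def by blast
  show "{1..m} \<notin> K"
  proof
    assume "{1..m} \<in> K"
    then have "Pow {1..m} \<subseteq> K" using down by blast
    moreover have "K \<subseteq> Pow {1..m}" using sub by blast
    ultimately show False using assms(2) by blast
  qed
qed

lemma alex_mem: "J \<in> alex_dual m K \<longleftrightarrow> J \<subseteq> {1..m} \<and> {1..m} - J \<notin> K"
  unfolding alex_dual_def by simp

lemma e_rr: "{Inr j, Inr k} \<in> bier m K \<longleftrightarrow> {} \<in> K \<and> {j, k} \<in> alex_dual m K"
proof -
  have "{i. Inl i \<in> {Inr j, Inr k}} = {}" "{i. Inr i \<in> {Inr j, Inr k}} = {j, k}" by auto
  then show ?thesis unfolding bier_char by simp
qed

lemma e_ll: "{Inl j, Inl k} \<in> bier m K \<longleftrightarrow> {j, k} \<in> K \<and> {} \<in> alex_dual m K"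
proof -
  have "{i. Inr i \<in> {Inl j, Inl k}} = {}" "{i. Inl i \<in> {Inl j, Inl k}} = {j, k}" by auto
  then show ?thesis unfolding bier_char by simp
qed

lemma e_lr: "{Inl j, Inr k} \<in> bier m K \<longleftrightarrow> {j} \<in> K \<and> {k} \<in> alex_dual m K \<and> j \<noteq> k"
proof -
  have "{i. Inr i \<in> {Inl j, Inr k}} = {k}" "{i. Inl i \<in> {Inl j, Inr k}} = {j}" by auto
  then show ?thesis unfolding bier_char by auto
qed

lemma v_l: "Inl j \<in> vertices (bier m K) \<longleftrightarrow> {j} \<in> K \<and> {} \<in> alex_dual m K"
proof -
  have "{i. Inr i \<in> {Inl j}} = {}" "{i. Inl i \<in> {Inl j}} = {j}" by auto
  then show ?thesis unfolding bier_char vertices_def by simp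
qed

lemma v_r: "Inr j \<in> vertices (bier m K) \<longleftrightarrow> {} \<in> K \<and> {j} \<in> alex_dual m K"
proof -
  have "{i. Inl i \<in> {Inr j}} = {}" "{i. Inr i \<in> {Inr j}} = {j}" by auto
  then show ?thesis unfolding bier_char vertices_def by simp
qed

lemma onto_lemma:
  assumes "inj_on g S" "g ` S \<subseteq> {..<n}" "card S = n" "x < n"
  shows "\<exists>k\<in>S. g k = x"
proof -
  have "card (g ` S) = card {..<n}" using assms(1,3) by (simp add: card_image)
  then have "g ` S = {..<n}" using assms(2) by (intro card_subset_eq) auto
  then have "x \<in> g ` S" using assms(4) by auto
  then show ?thesis by auto
qed

lemma caseA:
  assumes sc: "simplicial_complex_on m K" and nf: "K \<noteq> Pow {1..m}" and p: "p \<in> {1..m}" "{p} \<notin> K"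
    and cv: "\<forall>v\<in>vertices (bier m K). c v < n"
    and ce: "\<forall>u v. {u, v} \<in> bier m K \<longrightarrow> u \<noteq> v \<longrightarrow> c u \<noteq> c v"
  shows "m - 1 \<le> n" and "n = m - 1 \<Longrightarrow> Pgood m K"
proof -
  note f = sc_facts[OF sc nf]
  define S where "S = {1..m} - {p}"
  have cS: "card S = m - 1" unfolding S_def using p by (simp add: card_Diff_subset)
  have noP: "p \<notin> F" if "F \<in> K" for F
  proof
    assume "p \<in> F" then have "{p} \<in> K" using f(4)[OF that] by blast
    then show False using p by blast
  qed
  have adS: "J \<in> alex_dual m K" if "J \<subseteq> S" for J
  proof -
    have "p \<in> {1..m} - J" using that p by (auto simp: S_def)
    then have "{1..m} - J \<notin> K" using noP by blast
    then show ?thesis unfolding alex_mem using that by (auto simp: S_def)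
  qed
  have vR: "Inr j \<in> vertices (bier m K)" if "j \<in> S" for j
    unfolding v_r using f(1) adS that by auto
  have inj: "inj_on (c \<circ> Inr) S"
  proof (rule inj_onI)
    fix j k assume jk: "j \<in> S" "k \<in> S" "(c \<circ> Inr) j = (c \<circ> Inr) k"
    show "j = k"
    proof (rule ccontr)
      assume "j \<noteq> k"
      moreover have "{Inr j, Inr k} \<in> bier m K" unfolding e_rr using f(1) adS jk by auto
      ultimately show False using ce jk(3) by auto
    qed
  qed
  have img: "(c \<circ> Inr) ` S \<subseteq> {..<n}" using cv vR by auto
  show "m - 1 \<le> n" using card_inj_on_le[OF inj img] cS by simp
  assume nm: "n = m - 1"
  have onto: "\<exists>k\<in>S. c (Inr k) = x" if "x < m - 1" for x
    using onto_lemma[OF inj] img cS nm that by auto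
  have e0: "{} \<in> alex_dual m K" unfolding alex_mem using f(2) by simp
  have cl: "c (Inl i) = c (Inr i)" if i: "i \<in> S" "{i} \<in> K" for i
  proof -
    have "Inl i \<in> vertices (bier m K)" unfolding v_l using i e0 by simp
    then have "c (Inl i) < m - 1" using cv nm by auto
    then obtain k where k: "k \<in> S" "c (Inr k) = c (Inl i)" using onto by blast
    show ?thesis
    proof (cases "k = i")
      case True then show ?thesis using k by simp
    next
      case False
      have E: "{Inl i, Inr k} \<in> bier m K" unfolding e_lr using i adS k False by auto
      show ?thesis using ce[rule_format, OF E] k(2) by auto
    qed
  qed
  show "Pgood m K"
  proof (cases "S \<in> K")
    case True
    have "K = Pow S"
    proof
      show "K \<subseteq> Pow S" using f(3) noP by (auto simp: S_def)
      show "Pow S \<subseteq> K" using f(4) True by blast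
    qed
    then show ?thesis unfolding Pgood_def S_def using p by blast
  next
    case False
    have ap: "{p} \<in> alex_dual m K" unfolding alex_mem using p False by (simp add: S_def)
    have "Inr p \<in> vertices (bier m K)" unfolding v_r using f(1) ap by simp
    then have "c (Inr p) < m - 1" using cv nm by auto
    then obtain k where k: "k \<in> S" "c (Inr k) = c (Inr p)" using onto by blast
    have kp: "k \<noteq> p" "k \<in> {1..m}" using k by (auto simp: S_def)
    have "{p, k} \<notin> alex_dual m K"
    proof
      assume "{p, k} \<in> alex_dual m K"
      then have E: "{Inr p, Inr k} \<in> bier m K" unfolding e_rr using f(1) by simp
      show False using ce[rule_format, OF E] k(2) kp by auto
    qed
    then have pkK: "{1..m} - {p, k} \<in> K" unfolding alex_mem using p kp by auto
    have nk: "{k} \<notin> K"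
    proof
      assume kK: "{k} \<in> K"
      have "{Inl k, Inr p} \<in> bier m K" unfolding e_lr using kK ap kp by simp
      moreover have "c (Inl k) = c (Inr p)" using cl[OF k(1) kK] k(2) by simp
      ultimately show False using ce[rule_format, of "Inl k" "Inr p"] by auto
    qed
    have "K = Pow ({1..m} - {p, k})"
    proof
      show "K \<subseteq> Pow ({1..m} - {p, k})"
      proof
        fix F assume F: "F \<in> K"
        have "k \<notin> F"
        proof
          assume "k \<in> F" then have "{k} \<in> K" using f(4)[OF F] by blast
          then show False using nk by blast
        qed
        then show "F \<in> Pow ({1..m} - {p, k})" using f(3)[OF F] noP[OF F] by auto
      qed
      show "Pow ({1..m} - {p, k}) \<subseteq> K" using f(4) pkK by blast
    qed
    then show ?thesis unfolding Pgood_def using p kp by blast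
  qed
qed

lemma caseB:
  assumes sc: "simplicial_complex_on m K" and nf: "K \<noteq> Pow {1..m}" and p: "p \<in> {1..m}" "{p} \<notin> alex_dual m K"
    and cv: "\<forall>v\<in>vertices (bier m K). c v < n"
    and ce: "\<forall>u v. {u, v} \<in> bier m K \<longrightarrow> u \<noteq> v \<longrightarrow> c u \<noteq> c v"
  shows "m - 1 \<le> n" and "n = m - 1 \<Longrightarrow> Pgood m K"
proof -
  note f = sc_facts[OF sc nf]
  define S where "S = {1..m} - {p}"
  have cS: "card S = m - 1" unfolding S_def using p by (simp add: card_Diff_subset)
  have SK: "S \<in> K" using p unfolding alex_mem S_def by simp
  have PS: "J \<in> K" if "J \<subseteq> S" for J using f(4)[OF SK that] .
  have e0: "{} \<in> alex_dual m K" unfolding alex_mem using f(2) by simp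
  have vL: "Inl j \<in> vertices (bier m K)" if "j \<in> S" for j
    unfolding v_l using e0 PS that by auto
  have inj: "inj_on (c \<circ> Inl) S"
  proof (rule inj_onI)
    fix j k assume jk: "j \<in> S" "k \<in> S" "(c \<circ> Inl) j = (c \<circ> Inl) k"
    show "j = k"
    proof (rule ccontr)
      assume "j \<noteq> k"
      moreover have "{Inl j, Inl k} \<in> bier m K" unfolding e_ll using e0 PS jk by auto
      ultimately show False using ce jk(3) by auto
    qed
  qed
  have img: "(c \<circ> Inl) ` S \<subseteq> {..<n}" using cv vL by auto
  show "m - 1 \<le> n" using card_inj_on_le[OF inj img] cS by simp
  assume nm: "n = m - 1"
  have onto: "\<exists>k\<in>S. c (Inl k) = x" if "x < m - 1" for x
    using onto_lemma[OF inj] img cS nm that by auto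
  have cl: "c (Inr j) = c (Inl j)" if j: "j \<in> S" "{j} \<in> alex_dual m K" for j
  proof -
    have "Inr j \<in> vertices (bier m K)" unfolding v_r using j f(1) by simp
    then have "c (Inr j) < m - 1" using cv nm by auto
    then obtain k where k: "k \<in> S" "c (Inl k) = c (Inr j)" using onto by blast
    show ?thesis
    proof (cases "k = j")
      case True then show ?thesis using k by simp
    next
      case False
      have E: "{Inl k, Inr j} \<in> bier m K" unfolding e_lr using j PS k False by auto
      show ?thesis using ce[rule_format, OF E] k(2) False by auto
    qed
  qed
  show "Pgood m K"
  proof (cases "{p} \<in> K")
    case False
    have "K = Pow S"
    proof
      show "K \<subseteq> Pow S"
      proof
        fix F assume F: "F \<in> K"
        have "p \<notin> F"
        proof
          assume "p \<in> F" then have "{p} \<in> K" using f(4)[OF F] by blast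
          then show False using False by blast
        qed
        then show "F \<in> Pow S" using f(3)[OF F] by (auto simp: S_def)
      qed
      show "Pow S \<subseteq> K" using PS by blast
    qed
    then have KE: "K = Pow ({1..m} - {p})" unfolding S_def .
    show ?thesis unfolding Pgood_def by (intro exI[of _ p] conjI disjI1) (use p KE in auto)
  next
    case True
    have "Inl p \<in> vertices (bier m K)" unfolding v_l using True e0 by simp
    then have "c (Inl p) < m - 1" using cv nm by auto
    then obtain k where k: "k \<in> S" "c (Inl k) = c (Inl p)" using onto by blast
    have kp: "k \<noteq> p" "k \<in> {1..m}" using k by (auto simp: S_def)
    have npk: "{p, k} \<notin> K"
    proof
      assume "{p, k} \<in> K"
      then have E: "{Inl p, Inl k} \<in> bier m K" unfolding e_ll using e0 by simp
      show False using ce[rule_format, OF E] k(2) kp by auto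
    qed
    have ak: "{k} \<notin> alex_dual m K"
    proof
      assume ka: "{k} \<in> alex_dual m K"
      have "{Inl p, Inr k} \<in> bier m K" unfolding e_lr using ka True kp by auto
      moreover have "c (Inr k) = c (Inl p)" using cl[OF k(1) ka] k(2) by simp
      ultimately show False using ce[rule_format, of "Inl p" "Inr k"] by auto
    qed
    have "{k} \<subseteq> {1..m}" using kp by simp
    then have kK: "{1..m} - {k} \<in> K" using ak unfolding alex_mem by blast
    have "K = Pow ({1..m} - {p}) \<union> Pow ({1..m} - {k})"
    proof
      show "K \<subseteq> Pow ({1..m} - {p}) \<union> Pow ({1..m} - {k})"
      proof
        fix F assume F: "F \<in> K"
        have "\<not> (p \<in> F \<and> k \<in> F)"
        proof
          assume "p \<in> F \<and> k \<in> F" then have "{p, k} \<in> K" using f(4)[OF F, of "{p, k}"] by simp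
          then show False using npk by blast
        qed
        note nn = this
        show "F \<in> Pow ({1..m} - {p}) \<union> Pow ({1..m} - {k})"
        proof (cases "p \<in> F")
          case True
          then have "k \<notin> F" using nn by blast
          then have "F \<subseteq> {1..m} - {k}" using f(3)[OF F] by auto
          then show ?thesis by simp
        next
          case False
          then have "F \<subseteq> {1..m} - {p}" using f(3)[OF F] by auto
          then show ?thesis by simp
        qed
      qed
      have "Pow S \<subseteq> K" using PS by blast
      moreover have "Pow ({1..m} - {k}) \<subseteq> K"
      proof
        fix G assume "G \<in> Pow ({1..m} - {k})" then show "G \<in> K" using f(4)[OF kK, of G] by simp
      qed
      ultimately show "Pow ({1..m} - {p}) \<union> Pow ({1..m} - {k}) \<subseteq> K" unfolding S_def by (rule Un_least)
    qed
    then have KE: "K = Pow ({1..m} - {p}) \<union> Pow ({1..m} - {k})" .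
    have pk: "p \<noteq> k" using kp by simp
    show ?thesis unfolding Pgood_def using p(1) kp(2) pk KE by blast
  qed
qed



lemma exists_col:
  assumes "simplicial_complex_on m K"
  shows "colorable (bier m K) (2 * m + 2)"
proof -
  define c :: "nat + nat \<Rightarrow> nat" where "c x = (case x of Inl i \<Rightarrow> 2 * i | Inr i \<Rightarrow> 2 * i + 1)" for x
  have sub: "F \<in> K \<Longrightarrow> F \<subseteq> {1..m}" for F using assms unfolding simplicial_complex_on_def by blast
  have "\<forall>v\<in>vertices (bier m K). c v < 2 * m + 2"
  proof
    fix v assume v: "v \<in> vertices (bier m K)"
    show "c v < 2 * m + 2"
    proof (cases v)
      case (Inl i)
      then have "{i} \<in> K" using v v_l by auto
      then have "i \<le> m" using sub[of "{i}"] by auto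
      then show ?thesis using Inl by (simp add: c_def)
    next
      case (Inr i)
      then have "{i} \<in> alex_dual m K" using v v_r by auto
      then have "i \<le> m" unfolding alex_mem by auto
      then show ?thesis using Inr by (simp add: c_def)
    qed
  qed
  moreover have "c u \<noteq> c v" if "u \<noteq> v" for u v
    using that by (cases u; cases v) (auto simp: c_def; presburger)+
  ultimately show ?thesis unfolding colorable_def by blast
qed

lemma key:
  fixes m :: nat
  assumes sc: "simplicial_complex_on m K" and nf: "K \<noteq> Pow {1..m}"
    and f0c: "f0 K < m \<or> f0 (alex_dual m K) < m"
  shows "\<And>n. colorable (bier m K) n \<Longrightarrow> m - 1 \<le> n"
    and "colorable (bier m K) (m - 1) \<Longrightarrow> Pgood m K"
proof -
  have sub: "F \<in> K \<Longrightarrow> F \<subseteq> {1..m}" for F using sc unfolding simplicial_complex_on_def by blast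
  have ex: "\<exists>p. p \<in> {1..m} \<and> ({p} \<notin> K \<or> {p} \<notin> alex_dual m K)"
  proof (rule ccontr)
    assume "\<not> ?thesis"
    then have all: "\<forall>p\<in>{1..m}. {p} \<in> K \<and> {p} \<in> alex_dual m K" by blast
    have v1: "vertices K = {1..m}" using all sub unfolding vertices_def by auto
    have v2: "vertices (alex_dual m K) = {1..m}" using all unfolding vertices_def alex_mem by auto
    show False using f0c unfolding f0_def v1 v2 by simp
  qed
  then obtain p where p: "p \<in> {1..m}" "{p} \<notin> K \<or> {p} \<notin> alex_dual m K" by blast
  show "m - 1 \<le> n" if col: "colorable (bier m K) n" for n
  proof -
    obtain c where c: "\<forall>v\<in>vertices (bier m K). c v < n" "\<forall>u v. {u, v} \<in> bier m K \<longrightarrow> u \<noteq> v \<longrightarrow> c u \<noteq> c v"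
      using col unfolding colorable_def by blast
    show ?thesis using p(2) caseA(1)[OF sc nf p(1) _ c] caseB(1)[OF sc nf p(1) _ c] by blast
  qed
  show "Pgood m K" if col: "colorable (bier m K) (m - 1)"
  proof -
    obtain c where c: "\<forall>v\<in>vertices (bier m K). c v < m - 1" "\<forall>u v. {u, v} \<in> bier m K \<longrightarrow> u \<noteq> v \<longrightarrow> c u \<noteq> c v"
      using col unfolding colorable_def by blast
    show ?thesis using p(2) caseA(2)[OF sc nf p(1) _ c] caseB(2)[OF sc nf p(1) _ c] by blast
  qed
qed

theorem mainTheorem7:
  fixes m :: nat and K :: "nat set set"
  assumes "m \<ge> 3"
    and "simplicial_complex_on m K"
    and "K \<noteq> Pow {1..m}"
    and "f0 K < m \<or> f0 (alex_dual m K) < m"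
  shows "(chromatic_number (bier m K) = m - 1 \<longleftrightarrow>
           (\<exists>\<sigma>. \<sigma> permutes {1..m} \<and>
              ((`) ((`) \<sigma>) K = Pow {1..m-1} \<or>
               (`) ((`) \<sigma>) K = Pow {1..m-2} \<or>
               (`) ((`) \<sigma>) K = Pow {1..m-1} \<union> Pow ({1..m-2} \<union> {m}))))
       \<and> ((\<exists>\<sigma>. \<sigma> permutes {1..m} \<and>
              ((`) ((`) \<sigma>) K = Pow {1..m-1} \<or>
               (`) ((`) \<sigma>) K = Pow {1..m-2} \<or>
               (`) ((`) \<sigma>) K = Pow {1..m-1} \<union> Pow ({1..m-2} \<union> {m})))
          \<longrightarrow> complex_iso (bier m K) ((suspension ^^ (m - 3)) Z4))"
proof -
  note PI = perm_iff[OF assms(1), of K]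
  note k = key[OF assms(2,3,4)]
  have "chromatic_number (bier m K) = m - 1 \<longleftrightarrow> Pgood m K"
  proof
    assume ch: "chromatic_number (bier m K) = m - 1"
    have "colorable (bier m K) (LEAST n. colorable (bier m K) n)"
      using exists_col[OF assms(2)] by (rule LeastI)
    then have "colorable (bier m K) (m - 1)" using ch chrom_eq by metis
    then show "Pgood m K" using k(2) by blast
  next
    assume g: "Pgood m K"
    have "(LEAST n. colorable (bier m K) n) = m - 1"
      using good_col[OF g] k(1) by (rule Least_equality)
    then show "chromatic_number (bier m K) = m - 1" using chrom_eq by metis
  qed
  then show ?thesis unfolding PI using good_iso[OF assms(1), of K] by simp
qed


end
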